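(* Let $X$ be a finite rack with connected components $C_1,\dots,C_k$. There exists $N$ (depending on $X$) such that for all integers $n_1,\dots,n_k\ge N$ with $n=n_1+\dots+n_k$, all nonnegative integers $m_1,\dots,m_k$ with $m=m_1+\dots+m_k$, and every $w\in X(m_1,\dots,m_k)/B_m$, the map \[ M_w:X^*(n_1,\dots,n_k)/B_n\to X^*(n_1+m_1,\dots,n_k+m_k)/B_{n+m},\qquad M_w(v)=wv \] (concatenation of representatives) is surjective.
   Context: A rack is a set $X$ with an operation $x^y$ such that $x\mapsto x^y$ is bijective for each $y$ and $(z^x)^y=(z^y)^{x^y}$. Its connected components are the classes of the smallest equivalence relation with $x\sim x^y$ for all $x,y$. $B_n$ (generators $\sigma_1,\dots,\sigma_{n-1}$) acts on $X^n$ from the right by $(\dots,x_i,x_{i+1},\dots)^{\sigma_i}=(\dots,x_{i+1},x_i^{x_{i+1}},\dots)$. For nonnegative integers $n_1,\dots,n_k$, $X(n_1,\dots,n_k)$ is the set of $(x_1,\dots,x_n)\in X^n$ with exactly $n_j$ entries in $C_j$ for each $j$, and $X^*(n_1,\dots,n_k)$ is the subset of those whose entries generate $X$ (i.e. lie in no proper subset $X_0$ closed under $x^y$); both are $B_n$-stable. Concatenation of tuples is compatible with $B_m\times B_{n}\hookrightarrow B_{m+n}$, giving a well-defined product of orbits. *)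

theory Defs
  imports Main
begin

text \<open>A rack on the carrier X with operation op, where op x y stands for x^y.\<close>
definition rack :: "'a set \<Rightarrow> ('a \<Rightarrow> 'a \<Rightarrow> 'a) \<Rightarrow> bool" where
  "rack X op \<longleftrightarrow>
     (\<forall>x\<in>X. \<forall>y\<in>X. op x y \<in> X) \<and>
     (\<forall>y\<in>X. bij_betw (\<lambda>x. op x y) X X) \<and>
     (\<forall>x\<in>X. \<forall>y\<in>X. \<forall>z\<in>X. op (op z x) y = op (op z y) (op x y))"

definition rack_conn :: "'a set \<Rightarrow> ('a \<Rightarrow> 'a \<Rightarrow> 'a) \<Rightarrow> ('a \<times> 'a) set" where
  "rack_conn X op =
     Restr (({(x, op x y) | x y. x \<in> X \<and> y \<in> X} \<union>
             {(op x y, x) | x y. x \<in> X \<and> y \<in> X})\<^sup>*) X"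

definition components :: "'a set \<Rightarrow> ('a \<Rightarrow> 'a \<Rightarrow> 'a) \<Rightarrow> 'a set set" where
  "components X op = X // rack_conn X op"

text \<open>X(n_1,...,n_k): tuples (lists) over X with exactly n C entries in each component C.\<close>
definition tuples :: "'a set \<Rightarrow> ('a \<Rightarrow> 'a \<Rightarrow> 'a) \<Rightarrow> ('a set \<Rightarrow> nat) \<Rightarrow> 'a list set" where
  "tuples X op n = {xs. set xs \<subseteq> X \<and>
     (\<forall>C\<in>components X op. length (filter (\<lambda>x. x \<in> C) xs) = n C)}"

definition generates :: "'a set \<Rightarrow> ('a \<Rightarrow> 'a \<Rightarrow> 'a) \<Rightarrow> 'a list \<Rightarrow> bool" where
  "generates X op xs \<longleftrightarrow>
     (\<forall>X0. X0 \<subseteq> X \<and> set xs \<subseteq> X0 \<and> (\<forall>a\<in>X0. \<forall>b\<in>X0. op a b \<in> X0) \<longrightarrow> X0 = X)"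

definition tuples_gen :: "'a set \<Rightarrow> ('a \<Rightarrow> 'a \<Rightarrow> 'a) \<Rightarrow> ('a set \<Rightarrow> nat) \<Rightarrow> 'a list set" where
  "tuples_gen X op n = {xs \<in> tuples X op n. generates X op xs}"

text \<open>Action of the generator sigma_i (0-based index i here).\<close>
definition braid_step :: "('a \<Rightarrow> 'a \<Rightarrow> 'a) \<Rightarrow> 'a list \<Rightarrow> 'a list \<Rightarrow> bool" where
  "braid_step op xs ys \<longleftrightarrow>
     (\<exists>i. Suc i < length xs \<and>
        ys = xs[i := xs ! Suc i, Suc i := op (xs ! i) (xs ! Suc i)])"

text \<open>Same B_n-orbit: equivalence generated by the sigma_i moves (and their inverses).\<close>
definition braid_equiv :: "('a \<Rightarrow> 'a \<Rightarrow> 'a) \<Rightarrow> ('a list \<times> 'a list) set" where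
  "braid_equiv op = ({(xs, ys). braid_step op xs ys} \<union> {(ys, xs). braid_step op xs ys})\<^sup>*"

end

theory Submission
  imports Defs
begin


lemma braid_step_app: "braid_step op (p @ a # b # s) (p @ b # op a b # s)"
  unfolding braid_step_def
  by (rule exI[of _ "length p"]) (simp add: list_update_append nth_append)

lemma braid_step_iff:
  "braid_step op xs ys \<longleftrightarrow> (\<exists>p a b s. xs = p @ [a, b] @ s \<and> ys = p @ [b, op a b] @ s)"
proof
  assume "braid_step op xs ys"
  then obtain i where i: "Suc i < length xs"
     "ys = xs[i := xs ! Suc i, Suc i := op (xs ! i) (xs ! Suc i)]"
    unfolding braid_step_def by blast
  define p where "p = take i xs"
  define s where "s = drop (Suc (Suc i)) xs"
  have xs: "xs = p @ [xs ! i, xs ! Suc i] @ s"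
    using i(1) unfolding p_def s_def
    by (metis Cons_nth_drop_Suc Suc_lessD append_Cons append_Nil append_take_drop_id)
  have lp: "length p = i" using i(1) by (simp add: p_def)
  have "ys = p @ [xs ! Suc i, op (xs ! i) (xs ! Suc i)] @ s"
    using i(2) lp by (subst i(2), subst xs) (simp add: list_update_append)
  then show "\<exists>p a b s. xs = p @ [a, b] @ s \<and> ys = p @ [b, op a b] @ s"
    using xs by blast
next
  assume "\<exists>p a b s. xs = p @ [a, b] @ s \<and> ys = p @ [b, op a b] @ s"
  then obtain p a b s where "xs = p @ [a, b] @ s" "ys = p @ [b, op a b] @ s" by blast
  then show "braid_step op xs ys" by (simp add: braid_step_app)
qed

definition fwd :: "('a \<Rightarrow> 'a \<Rightarrow> 'a) \<Rightarrow> ('a list \<times> 'a list) set" where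
  "fwd op = {(xs, ys). braid_step op xs ys}\<^sup>*"

lemma fwd_step: "(xs @ [a, b] @ s, xs @ [b, op a b] @ s) \<in> fwd op"
  unfolding fwd_def by (rule r_into_rtrancl) (simp add: braid_step_app)

lemma fwd_trans: "(x, y) \<in> fwd op \<Longrightarrow> (y, z) \<in> fwd op \<Longrightarrow> (x, z) \<in> fwd op"
  unfolding fwd_def by (rule rtrancl_trans)

lemma fwd_refl: "(x, x) \<in> fwd op"
  unfolding fwd_def by simp

lemma fwd_equiv: "(x, y) \<in> fwd op \<Longrightarrow> (x, y) \<in> braid_equiv op"
  unfolding fwd_def braid_equiv_def
  by (erule rtrancl_mono[THEN subsetD, rotated]) blast

lemma equiv_sym: "(x, y) \<in> braid_equiv op \<Longrightarrow> (y, x) \<in> braid_equiv op"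
proof -
  have "sym ({(xs, ys). braid_step op xs ys} \<union> {(ys, xs). braid_step op xs ys})"
    by (auto simp: sym_def)
  then have "sym (braid_equiv op)" unfolding braid_equiv_def by (rule sym_rtrancl)
  then show "(x, y) \<in> braid_equiv op \<Longrightarrow> (y, x) \<in> braid_equiv op" by (auto simp: sym_def)
qed

lemma equiv_trans: "(x, y) \<in> braid_equiv op \<Longrightarrow> (y, z) \<in> braid_equiv op \<Longrightarrow> (x, z) \<in> braid_equiv op"
  unfolding braid_equiv_def by (rule rtrancl_trans)

lemma equiv_refl: "(x, x) \<in> braid_equiv op"
  unfolding braid_equiv_def by simp

lemma equiv_prefix:
  assumes "(xs, ys) \<in> braid_equiv op" shows "(q @ xs, q @ ys) \<in> braid_equiv op"
  using assms unfolding braid_equiv_def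
proof (induction rule: rtrancl_induct)
  case base then show ?case by simp
next
  case (step y z)
  have pre: "braid_step op (q @ u) (q @ v)" if st: "braid_step op u v" for u v
  proof -
    obtain p a b s where "u = p @ [a, b] @ s" "v = p @ [b, op a b] @ s"
      using st unfolding braid_step_iff by blast
    then show ?thesis using braid_step_app[of op "q @ p" a b s] by simp
  qed
  have "braid_step op (q @ y) (q @ z) \<or> braid_step op (q @ z) (q @ y)"
    using step(2) pre by blast
  then have "(q @ y, q @ z) \<in> {(xs, ys). braid_step op xs ys} \<union> {(ys, xs). braid_step op xs ys}"
    by blast
  with step(3) show ?case by (rule rtrancl_into_rtrancl)
qed

lemma move_left:
  "(xs @ A @ [b] @ ys, xs @ [b] @ map (\<lambda>a. op a b) A @ ys) \<in> fwd op"
proof (induction A arbitrary: ys rule: rev_induct)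
  case Nil then show ?case by (simp add: fwd_refl)
next
  case (snoc a A)
  have 1: "(xs @ (A @ [a]) @ [b] @ ys, xs @ A @ [b] @ (op a b # ys)) \<in> fwd op"
    using fwd_step[of "xs @ A" a b ys op] by simp
  show ?case using fwd_trans[OF 1 snoc[of "op a b # ys"]] by simp
qed

lemma block_left:
  "(xs @ [a] @ B @ ys, xs @ B @ [foldl op a B] @ ys) \<in> fwd op"
proof (induction B arbitrary: xs a)
  case Nil then show ?case by (simp add: fwd_refl)
next
  case (Cons b B)
  have 1: "(xs @ [a] @ (b # B) @ ys, (xs @ [b]) @ [op a b] @ B @ ys) \<in> fwd op"
    using fwd_step[of xs a b "B @ ys" op] by simp
  show ?case using fwd_trans[OF 1 Cons[of "xs @ [b]" "op a b"]] by simp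
qed



lemma perm_period:
  assumes fin: "finite X" and bij: "bij_betw f X X" and x: "x \<in> X"
  shows "(f ^^ fact (card X)) x = x"
proof -
  have inX: "(f ^^ i) x \<in> X" for i
    using bij_betw_funpow[OF bij, of i] x by (auto simp: bij_betw_def)
  have "\<not> inj_on (\<lambda>i. (f ^^ i) x) {0..card X}"
  proof
    assume "inj_on (\<lambda>i. (f ^^ i) x) {0..card X}"
    then have "card {0..card X} \<le> card X"
      using card_inj_on_le[of "\<lambda>i. (f ^^ i) x" "{0..card X}" X] fin inX by auto
    then show False by simp
  qed
  then obtain i j where ij: "i \<le> card X" "j \<le> card X" "i < j" "(f ^^ i) x = (f ^^ j) x"
    unfolding inj_on_def by (metis atLeastAtMost_iff linorder_neqE_nat)
  define k where "k = j - i"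
  have "(f ^^ i) ((f ^^ k) x) = (f ^^ i) x"
    using ij by (simp add: k_def funpow_add[symmetric] o_def)
      (metis add.commute funpow_add le_add_diff_inverse less_imp_le_nat o_apply)
  moreover have "inj_on (f ^^ i) X" using bij_betw_funpow[OF bij, of i] by (auto simp: bij_betw_def)
  ultimately have fk: "(f ^^ k) x = x" using inX x by (auto simp: inj_on_def)
  have "k dvd fact (card X)" using ij by (intro dvd_fact) (auto simp: k_def)
  then obtain q where q: "fact (card X) = k * q" by (auto elim: dvdE)
  have "((f ^^ k) ^^ q) x = x" by (induction q) (simp_all add: fk)
  then show ?thesis by (simp add: q funpow_mult)
qed

lemma foldl_rep: "foldl op a (replicate k z) = ((\<lambda>x. op x z) ^^ k) a"
proof (induction k arbitrary: a)
  case (Suc k)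
  then show ?case using funpow_swap1[of "\<lambda>x. op x z" k a] by simp
qed simp

lemma rack_closed: "rack X op \<Longrightarrow> x \<in> X \<Longrightarrow> y \<in> X \<Longrightarrow> op x y \<in> X"
  unfolding rack_def by blast

lemma rack_bij: "rack X op \<Longrightarrow> y \<in> X \<Longrightarrow> bij_betw (\<lambda>x. op x y) X X"
  unfolding rack_def by blast

lemma rack_sd: "rack X op \<Longrightarrow> x \<in> X \<Longrightarrow> y \<in> X \<Longrightarrow> z \<in> X \<Longrightarrow>
   op (op z x) y = op (op z y) (op x y)"
  unfolding rack_def by blast

lemma block_period:
  assumes "finite X" "rack X op" "z \<in> X" "a \<in> X"
  shows "foldl op a (replicate (fact (card X)) z) = a"
  unfolding foldl_rep using perm_period[OF assms(1) rack_bij[OF assms(2,3)] assms(4)] .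

lemma block_pass:
  assumes "finite X" "rack X op" "z \<in> X" "a \<in> X"
  shows "(xs @ [a] @ replicate (fact (card X)) z @ ys, xs @ replicate (fact (card X)) z @ [a] @ ys) \<in> fwd op"
  using block_left[of xs a "replicate (fact (card X)) z" ys op] block_period[OF assms] by simp

lemma block_pass_list:
  assumes "finite X" "rack X op" "z \<in> X" "set A \<subseteq> X"
  shows "(xs @ A @ replicate (fact (card X)) z @ ys, xs @ replicate (fact (card X)) z @ A @ ys) \<in> fwd op"
  using assms(4)
proof (induction A arbitrary: xs)
  case Nil then show ?case by (simp add: fwd_refl)
next
  case (Cons a A)
  have 1: "(xs @ (a # A) @ replicate (fact (card X)) z @ ys,
            (xs @ [a]) @ replicate (fact (card X)) z @ A @ ys) \<in> fwd op"
    using Cons.IH[of "xs @ [a]"] Cons.prems by simp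
  have 2: "((xs @ [a]) @ replicate (fact (card X)) z @ A @ ys,
            xs @ replicate (fact (card X)) z @ [a] @ A @ ys) \<in> fwd op"
    using block_pass[OF assms(1-3), of a xs "A @ ys"] Cons.prems by simp
  show ?case using fwd_trans[OF 1 2] by simp
qed

lemma block_conj:
  assumes "finite X" "rack X op" "z \<in> X" "set Rest \<subseteq> X" "r \<in> set Rest"
  shows "(replicate (fact (card X)) z @ Rest, replicate (fact (card X)) (op z r) @ Rest) \<in> braid_equiv op"
proof -
  let ?O = "fact (card X)"
  obtain P S where R: "Rest = P @ r # S" using split_list[OF assms(5)] by blast
  have PX: "set P \<subseteq> X" and rX: "r \<in> X" using assms(4) R by auto
  have zr: "op z r \<in> X" using rack_closed[OF assms(2,3) rX] .
  have 1: "(P @ replicate ?O z @ [r] @ S, replicate ?O z @ P @ [r] @ S) \<in> fwd op"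
    using block_pass_list[OF assms(1-3) PX, of "[]" "[r] @ S"] by simp
  have 2: "(P @ replicate ?O z @ [r] @ S, P @ [r] @ replicate ?O (op z r) @ S) \<in> fwd op"
    using move_left[of P "replicate ?O z" r S op] by simp
  have 3: "(P @ [r] @ replicate ?O (op z r) @ S, replicate ?O (op z r) @ P @ [r] @ S) \<in> fwd op"
    using block_pass_list[OF assms(1,2) zr, of "P @ [r]" "[]" S] PX rX by simp
  have "(replicate ?O z @ P @ [r] @ S, replicate ?O (op z r) @ P @ [r] @ S) \<in> braid_equiv op"
    using equiv_trans[OF equiv_sym[OF fwd_equiv[OF 1]] equiv_trans[OF fwd_equiv[OF 2] fwd_equiv[OF 3]]] .
  then show ?thesis by (simp add: R)
qed



definition cnt :: "'a set \<Rightarrow> 'a list \<Rightarrow> nat" where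
  "cnt C xs = length (filter (\<lambda>x. x \<in> C) xs)"

lemma rc_sym: "(x, y) \<in> rack_conn X op \<Longrightarrow> (y, x) \<in> rack_conn X op"
proof -
  let ?S = "{(x, op x y) | x y. x \<in> X \<and> y \<in> X} \<union> {(op x y, x) | x y. x \<in> X \<and> y \<in> X}"
  have "sym ?S" by (auto simp: sym_def)
  then have "sym (?S\<^sup>*)" by (rule sym_rtrancl)
  then show "(x, y) \<in> rack_conn X op \<Longrightarrow> (y, x) \<in> rack_conn X op"
    unfolding rack_conn_def by (auto simp: sym_def)
qed

lemma rc_trans: "(x, y) \<in> rack_conn X op \<Longrightarrow> (y, z) \<in> rack_conn X op \<Longrightarrow> (x, z) \<in> rack_conn X op"
  unfolding rack_conn_def by (auto intro: rtrancl_trans)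

lemma rc_refl: "x \<in> X \<Longrightarrow> (x, x) \<in> rack_conn X op"
  unfolding rack_conn_def by auto

lemma rc_step: "rack X op \<Longrightarrow> x \<in> X \<Longrightarrow> y \<in> X \<Longrightarrow> (x, op x y) \<in> rack_conn X op"
  unfolding rack_conn_def using rack_closed[of X op x y] by blast

lemma comp_iff:
  assumes "C \<in> components X op" "(x, y) \<in> rack_conn X op"
  shows "x \<in> C \<longleftrightarrow> y \<in> C"
proof -
  obtain c where c: "c \<in> X" "C = rack_conn X op `` {c}"
    using assms(1) unfolding components_def by (auto elim: quotientE)
  have "(c, x) \<in> rack_conn X op \<longleftrightarrow> (c, y) \<in> rack_conn X op"
    using assms(2) rc_trans[of c x X op y] rc_trans[of c y X op x] rc_sym[of x y X op] by blast
  then show ?thesis using c by simp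
qed

lemma comp_of: "w \<in> X \<Longrightarrow> rack_conn X op `` {w} \<in> components X op \<and> w \<in> rack_conn X op `` {w}"
  unfolding components_def using rc_refl by (auto intro: quotientI)

lemma fwd_inv:
  assumes "rack X op" "(xs, ys) \<in> fwd op" "set xs \<subseteq> X"
  shows "set ys \<subseteq> X \<and> (\<forall>C\<in>components X op. cnt C ys = cnt C xs)"
  using assms(2) unfolding fwd_def
proof (induction rule: rtrancl_induct)
  case base then show ?case using assms(3) by simp
next
  case (step y z)
  obtain p a b s where e: "y = p @ [a, b] @ s" "z = p @ [b, op a b] @ s"
    using step(2) unfolding braid_step_iff by blast
  have abX: "a \<in> X" "b \<in> X" using step(3) e by auto
  have zX: "set z \<subseteq> X" using step(3) e rack_closed[OF assms(1) abX] by auto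
  have "cnt C z = cnt C y" if "C \<in> components X op" for C
    using comp_iff[OF that rc_step[OF assms(1) abX]] e by (auto simp: cnt_def)
  then show ?case using step(3) zX by auto
qed

lemma closed_inv:
  assumes fin: "finite X" and r: "rack X op" and X0: "X0 \<subseteq> X" "\<forall>a\<in>X0. \<forall>b\<in>X0. op a b \<in> X0"
    and y: "y \<in> X0" and p: "p \<in> X" and py: "op p y \<in> X0"
  shows "p \<in> X0"
proof -
  have yX: "y \<in> X" using X0 y by auto
  have inj: "inj_on (\<lambda>x. op x y) X" using rack_bij[OF r yX] by (auto simp: bij_betw_def)
  have "(\<lambda>x. op x y) ` X0 = X0"
    using endo_inj_surj[of X0 "\<lambda>x. op x y"] fin X0 y inj by (auto intro: finite_subset inj_on_subset)
  then obtain q where q: "q \<in> X0" "op q y = op p y" using py by force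
  then show ?thesis using inj p X0 by (auto simp: inj_on_def)
qed

lemma gather:
  assumes fin: "finite X" and r: "rack X op" and v: "v \<in> X" and t: "set t \<subseteq> X"
  shows "k < count_list t v \<Longrightarrow> \<exists>Rest. (t, replicate k v @ Rest) \<in> fwd op \<and> set Rest \<subseteq> X \<and>
     count_list t v \<le> count_list Rest v + k \<and>
     (\<forall>X0. X0 \<subseteq> X \<and> (\<forall>a\<in>X0. \<forall>b\<in>X0. op a b \<in> X0) \<and> set Rest \<subseteq> X0 \<longrightarrow> set t \<subseteq> X0)"
proof (induction k)
  case 0 then show ?case using t by (intro exI[of _ t]) (simp add: fwd_refl)
next
  case (Suc k)
  then obtain Rest where R: "(t, replicate k v @ Rest) \<in> fwd op" "set Rest \<subseteq> X"
     "count_list t v \<le> count_list Rest v + k"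
     "\<forall>X0. X0 \<subseteq> X \<and> (\<forall>a\<in>X0. \<forall>b\<in>X0. op a b \<in> X0) \<and> set Rest \<subseteq> X0 \<longrightarrow> set t \<subseteq> X0"
    by auto
  define n where "n = count_list Rest v - 1"
  have n: "count_list Rest v = Suc n" "0 < n" using R(3) Suc.prems unfolding n_def by linarith+
  obtain P S where PS: "Rest = P @ v # S" "v \<notin> set P" "count_list S v = n"
    using count_list_Suc_split_first[OF n(1)] by blast
  define Rest' where "Rest' = map (\<lambda>a. op a v) P @ S"
  have m: "(replicate k v @ P @ [v] @ S, replicate k v @ [v] @ map (\<lambda>a. op a v) P @ S) \<in> fwd op"
    by (rule move_left)
  have 1: "(t, replicate (Suc k) v @ Rest') \<in> fwd op"
    using fwd_trans[OF R(1)] m PS(1) by (simp add: Rest'_def replicate_app_Cons_same)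
  have PX: "set P \<subseteq> X" and SX: "set S \<subseteq> X" using R(2) PS by auto
  have 2: "set Rest' \<subseteq> X" using PX SX rack_closed[OF r _ v] by (auto simp: Rest'_def)
  have 3: "count_list t v \<le> count_list Rest' v + Suc k"
    using R(3) PS n by (simp add: Rest'_def)
  have vS: "v \<in> set S" using PS(3) n(2) count_notin by fastforce
  have 4: "set t \<subseteq> X0" if X0: "X0 \<subseteq> X" "\<forall>a\<in>X0. \<forall>b\<in>X0. op a b \<in> X0" "set Rest' \<subseteq> X0" for X0
  proof -
    have vX0: "v \<in> X0" using vS X0(3) by (auto simp: Rest'_def)
    have "p \<in> X0" if "p \<in> set P" for p
      using closed_inv[OF fin r X0(1,2) vX0, of p] that PX X0(3) by (auto simp: Rest'_def)
    then have "set Rest \<subseteq> X0" using PS(1) X0(3) vX0 by (auto simp: Rest'_def)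
    then show ?thesis using R(4) X0 by blast
  qed
  have 5: "\<forall>X0. X0 \<subseteq> X \<and> (\<forall>a\<in>X0. \<forall>b\<in>X0. op a b \<in> X0) \<and> set Rest' \<subseteq> X0 \<longrightarrow> set t \<subseteq> X0"
    using 4 by blast
  show ?case by (intro exI[of _ Rest'] conjI 1 2 3 5)
qed



lemma conj_reach:
  assumes fin: "finite X" and r: "rack X op" and v: "v \<in> X"
    and vw: "(v, w) \<in> rack_conn X op" and RX: "set Rest \<subseteq> X" and gen: "generates X op Rest"
  shows "(replicate (fact (card X)) v @ Rest, replicate (fact (card X)) w @ Rest) \<in> braid_equiv op"
proof -
  let ?O = "fact (card X)"
  define Z where "Z = {z \<in> X. (replicate ?O v @ Rest, replicate ?O z @ Rest) \<in> braid_equiv op}"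
  define G where "G = {y \<in> X. \<forall>x\<in>X. (x \<in> Z \<longleftrightarrow> op x y \<in> Z)}"
  have RG: "set Rest \<subseteq> G"
  proof
    fix y assume y: "y \<in> set Rest"
    have yX: "y \<in> X" using y RX by auto
    have "x \<in> Z \<longleftrightarrow> op x y \<in> Z" if x: "x \<in> X" for x
    proof -
      have e: "(replicate ?O x @ Rest, replicate ?O (op x y) @ Rest) \<in> braid_equiv op"
        using block_conj[OF fin r x RX y] .
      have xy: "op x y \<in> X" using rack_closed[OF r x yX] .
      show ?thesis unfolding Z_def using x xy e equiv_trans equiv_sym by blast
    qed
    then show "y \<in> G" using yX by (auto simp: G_def)
  qed
  have Gcl: "\<forall>a\<in>G. \<forall>b\<in>G. op a b \<in> G"
  proof (intro ballI)
    fix y1 y2 assume y1: "y1 \<in> G" and y2: "y2 \<in> G"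
    have y1X: "y1 \<in> X" and y2X: "y2 \<in> X" using y1 y2 by (auto simp: G_def)
    have "x \<in> Z \<longleftrightarrow> op x (op y1 y2) \<in> Z" if x: "x \<in> X" for x
    proof -
      have "x \<in> (\<lambda>u. op u y2) ` X" using bij_betw_imp_surj_on[OF rack_bij[OF r y2X]] x by simp
      then obtain x' where x': "x' \<in> X" "x = op x' y2" by auto
      have eq: "op x (op y1 y2) = op (op x' y1) y2"
        using rack_sd[OF r y1X y2X x'(1)] x'(2) by simp
      have x1X: "op x' y1 \<in> X" using rack_closed[OF r x'(1) y1X] .
      have "x \<in> Z \<longleftrightarrow> x' \<in> Z" using y2 x' by (auto simp: G_def)
      also have "\<dots> \<longleftrightarrow> op x' y1 \<in> Z" using y1 x' by (auto simp: G_def)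
      also have "\<dots> \<longleftrightarrow> op (op x' y1) y2 \<in> Z" using y2 x1X by (auto simp: G_def)
      finally show ?thesis using eq by simp
    qed
    then show "op y1 y2 \<in> G" using rack_closed[OF r y1X y2X] by (auto simp: G_def)
  qed
  have GX: "G \<subseteq> X" by (auto simp: G_def)
  have "G = X" using gen[unfolded generates_def, rule_format, of G] GX RG Gcl by blast
  let ?S = "{(x, op x y) | x y. x \<in> X \<and> y \<in> X} \<union> {(op x y, x) | x y. x \<in> X \<and> y \<in> X}"
  have st: "(a, b) \<in> ?S\<^sup>* \<Longrightarrow> (a \<in> Z \<longleftrightarrow> b \<in> Z)" for a b
  proof (induction rule: rtrancl_induct)
    case base then show ?case by simp
  next
    case (step y z)
    from step(2) have "y \<in> Z \<longleftrightarrow> z \<in> Z"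
    proof (elim UnE)
      assume "(y, z) \<in> {(x, op x y) | x y. x \<in> X \<and> y \<in> X}"
      then obtain x y' where "y = x" "z = op x y'" "x \<in> X" "y' \<in> X" by blast
      then show ?thesis using \<open>G = X\<close> by (auto simp: G_def)
    next
      assume "(y, z) \<in> {(op x y, x) | x y. x \<in> X \<and> y \<in> X}"
      then obtain x y' where "z = x" "y = op x y'" "x \<in> X" "y' \<in> X" by blast
      then show ?thesis using \<open>G = X\<close> by (auto simp: G_def)
    qed
    then show ?case using step(3) by simp
  qed
  have "v \<in> Z" using v equiv_refl by (auto simp: Z_def)
  moreover have "(v, w) \<in> ?S\<^sup>*" using vw unfolding rack_conn_def by auto
  ultimately have "w \<in> Z" using st by blast
  then show ?thesis by (simp add: Z_def)
qed

lemma pigeon: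
  assumes "set L \<subseteq> A" "finite A" "card A * k < length L"
  shows "\<exists>v\<in>A. k < count_list L v"
proof (rule ccontr)
  assume "\<not> ?thesis"
  then have "sum (count_list L) A \<le> card A * k"
    by (intro sum_bounded_above[of A "count_list L" k, simplified]) (auto simp: not_less)
  then show False using sum_count_set[OF assms(1,2)] assms(3) by simp
qed

lemma count_filter: "v \<in> C \<Longrightarrow> count_list (filter (\<lambda>x. x \<in> C) us) v = count_list us v"
  by (induction us) auto

lemma single:
  assumes fin: "finite X" and r: "rack X op" and usX: "set us \<subseteq> X" and gen: "generates X op us"
    and w: "w \<in> X" and big: "card X * fact (card X) < cnt (rack_conn X op `` {w}) us"
  shows "\<exists>vs. set vs \<subseteq> X \<and> generates X op vs \<and> (w # vs, us) \<in> braid_equiv op \<and>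
     (\<forall>C\<in>components X op. cnt C (w # vs) = cnt C us)"
proof -
  let ?O = "fact (card X)"
  let ?C0 = "rack_conn X op `` {w}"
  have C0X: "?C0 \<subseteq> X" unfolding rack_conn_def by auto
  have "card ?C0 \<le> card X" using C0X fin by (rule card_mono[rotated])
  then have ineq: "card ?C0 * ?O \<le> card X * ?O" by simp
  have big': "card ?C0 * ?O < length (filter (\<lambda>x. x \<in> ?C0) us)"
    using le_less_trans[OF ineq big[unfolded cnt_def]] .
  obtain v where v: "v \<in> ?C0" "?O < count_list (filter (\<lambda>x. x \<in> ?C0) us) v"
    using pigeon[OF _ finite_subset[OF C0X fin] big'] by auto
  have vX: "v \<in> X" using v C0X by auto
  have wv: "(w, v) \<in> rack_conn X op" using v by simp
  have cv: "?O < count_list us v" using v count_filter[OF v(1)] by simp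
  obtain Rest where R: "(us, replicate ?O v @ Rest) \<in> fwd op" "set Rest \<subseteq> X"
    "\<forall>X0. X0 \<subseteq> X \<and> (\<forall>a\<in>X0. \<forall>b\<in>X0. op a b \<in> X0) \<and> set Rest \<subseteq> X0 \<longrightarrow> set us \<subseteq> X0"
    using gather[OF fin r vX usX cv] by blast
  have genR: "generates X op Rest" using gen R(3) unfolding generates_def by blast
  have inv: "\<forall>C\<in>components X op. cnt C (replicate ?O v @ Rest) = cnt C us"
    using fwd_inv[OF r R(1) usX] by auto
  have e1: "(replicate ?O v @ Rest, replicate ?O w @ Rest) \<in> braid_equiv op"
    using conj_reach[OF fin r vX rc_sym[OF wv] R(2) genR] .
  have "(1::nat) \<le> fact (card X)" by (rule fact_ge_1)
  then have O1: "?O = Suc (?O - 1)" by linarith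
  define vs where "vs = replicate (?O - 1) w @ Rest"
  have wvs: "w # vs = replicate ?O w @ Rest" unfolding vs_def using O1
    by (metis append_Cons replicate_Suc)
  have 1: "set vs \<subseteq> X" using w R(2) by (auto simp: vs_def)
  have 2: "generates X op vs" using genR unfolding generates_def vs_def by auto
  have 3: "(w # vs, us) \<in> braid_equiv op"
    unfolding wvs using equiv_trans[OF equiv_sym[OF e1] equiv_sym[OF fwd_equiv[OF R(1)]]] .
  have 4: "cnt C (w # vs) = cnt C us" if C: "C \<in> components X op" for C
  proof -
    have "w \<in> C \<longleftrightarrow> v \<in> C" using comp_iff[OF C wv] .
    then have "cnt C (replicate ?O w @ Rest) = cnt C (replicate ?O v @ Rest)"
      by (simp add: cnt_def filter_replicate)
    then show ?thesis using inv C wvs by simp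
  qed
  show ?thesis using 1 2 3 4 by blast
qed



lemma main_ind:
  assumes fin: "finite X" and r: "rack X op"
    and nN: "\<forall>C\<in>components X op. card X * fact (card X) \<le> n C"
  shows "\<And>m us. ws \<in> tuples X op m \<Longrightarrow> us \<in> tuples_gen X op (\<lambda>C. n C + m C) \<Longrightarrow>
     \<exists>vs\<in>tuples_gen X op n. (ws @ vs, us) \<in> braid_equiv op"
proof (induction ws)
  case Nil
  have "m C = 0" if "C \<in> components X op" for C using Nil(1) that by (auto simp: tuples_def)
  then have "us \<in> tuples_gen X op n" using Nil(2) by (auto simp: tuples_gen_def tuples_def)
  then show ?case using equiv_refl by fastforce
next
  case (Cons w ws m us)
  let ?C0 = "rack_conn X op `` {w}"
  have wX: "w \<in> X" and wsX: "set ws \<subseteq> X" using Cons.prems(1) by (auto simp: tuples_def)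
  have C0: "?C0 \<in> components X op" "w \<in> ?C0" using comp_of[OF wX] by auto
  have mC: "length (filter (\<lambda>x. x \<in> C) (w # ws)) = m C" if "C \<in> components X op" for C
    using Cons.prems(1) that by (auto simp: tuples_def)
  have usX: "set us \<subseteq> X" and usgen: "generates X op us"
    and usC: "\<And>C. C \<in> components X op \<Longrightarrow> cnt C us = n C + m C"
    using Cons.prems(2) by (auto simp: tuples_gen_def tuples_def cnt_def)
  have "1 \<le> m ?C0" using mC[OF C0(1)] C0(2) by simp
  then have big: "card X * fact (card X) < cnt ?C0 us" using usC[OF C0(1)] nN C0(1) by fastforce
  obtain vs0 where vs0: "set vs0 \<subseteq> X" "generates X op vs0" "(w # vs0, us) \<in> braid_equiv op"
     "\<forall>C\<in>components X op. cnt C (w # vs0) = cnt C us"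
    using single[OF fin r usX usgen wX big] by blast
  define m' where "m' = (\<lambda>C. if w \<in> C then m C - 1 else m C)"
  have ws': "ws \<in> tuples X op m'"
    unfolding tuples_def
  proof (intro CollectI conjI ballI)
    show "set ws \<subseteq> X" using wsX .
  next
    fix C assume C: "C \<in> components X op"
    show "length (filter (\<lambda>x. x \<in> C) ws) = m' C"
      using mC[OF C] by (cases "w \<in> C") (auto simp: m'_def)
  qed
  have "length (filter (\<lambda>x. x \<in> C) vs0) = n C + m' C" if C: "C \<in> components X op" for C
    using vs0(4) C usC[OF C] mC[OF C] by (auto simp: cnt_def m'_def)
  then have "vs0 \<in> tuples_gen X op (\<lambda>C. n C + m' C)"
    using vs0(1,2) by (auto simp: tuples_gen_def tuples_def)
  then obtain vs where vs: "vs \<in> tuples_gen X op n" "(ws @ vs, vs0) \<in> braid_equiv op"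
    using Cons.IH[OF ws'] by blast
  have "((w # ws) @ vs, w # vs0) \<in> braid_equiv op"
    using equiv_prefix[OF vs(2), of "[w]"] by simp
  then show ?case using vs(1) equiv_trans[OF _ vs0(3)] by blast
qed

theorem proposition4p22:
  fixes X :: "'a set" and op :: "'a \<Rightarrow> 'a \<Rightarrow> 'a"
  assumes "finite X" and "rack X op"
  shows "\<exists>N::nat. \<forall>n m :: 'a set \<Rightarrow> nat.
           (\<forall>C\<in>components X op. N \<le> n C) \<longrightarrow>
           (\<forall>ws\<in>tuples X op m. \<forall>us\<in>tuples_gen X op (\<lambda>C. n C + m C).
              \<exists>vs\<in>tuples_gen X op n. (ws @ vs, us) \<in> braid_equiv op)"
  using main_ind[OF assms] by blast


end
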